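(* In the category of topological spaces, let $\{b\}\to\{a\searrow b\}$ be the inclusion of the closed point $b$ into the Sierpiński space. Then: (1) $\{\{b\}\to\{a\searrow b\}\}^l$ is exactly the class of continuous maps $f:A\to B$ with dense image $f(A)\subseteq B$; (2) $\{\{b\}\to\{a\searrow b\}\}^{lr}$ is exactly the class of closed embeddings, i.e. continuous maps $g:A\to X$ which are homeomorphisms onto a closed subset of $X$ equipped with the induced topology.
   Context: For morphisms $f:A\to B$ and $g:X\to Y$ in a category, write $f\rightthreetimes g$ ("$f$ has the left lifting property with respect to $g$") if for all morphisms $i:A\to X$, $j:B\to Y$ with $g\circ i=j\circ f$ there exists a morphism $h:B\to X$ with $h\circ f=i$ and $g\circ h=j$. For a class $C$ of morphisms, $C^l=\{f:\ f\rightthreetimes g\text{ for all }g\in C\}$ and $C^r=\{g:\ f\rightthreetimes g\text{ for all }f\in C\}$; $C^{lr}=(C^l)^r$. $\{a\searrow b\}$ denotes the Sierpiński space on points $a,b$ with open sets $\emptyset,\{a\},\{a,b\}$ (so $a$ is open, $b$ is closed and $b\in\overline{\{a\}}$). *)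

theory Defs
  imports "HOL-Analysis.Analysis"
begin

text \<open>Morphisms of Top are continuous maps; two maps are equal as morphisms iff
they agree on the topological space of the domain.\<close>

definition llp ::
  "'a topology \<Rightarrow> 'b topology \<Rightarrow> ('a \<Rightarrow> 'b) \<Rightarrow>
   'c topology \<Rightarrow> 'd topology \<Rightarrow> ('c \<Rightarrow> 'd) \<Rightarrow> bool" where
  "llp A B f X Y g \<longleftrightarrow>
     (\<forall>i j. continuous_map A X i \<and> continuous_map B Y j \<and>
            (\<forall>x\<in>topspace A. g (i x) = j (f x)) \<longrightarrow>
        (\<exists>h. continuous_map B X h \<and> (\<forall>x\<in>topspace A. h (f x) = i x) \<and>
             (\<forall>y\<in>topspace B. g (h y) = j y)))"

text \<open>Sierpinski space on bool: a = True (open point), b = False (closed point).\<close>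

definition sierpinski :: "bool topology" where
  "sierpinski = topology (\<lambda>U. U = {} \<or> U = {True} \<or> U = UNIV)"

definition closed_pt :: "bool topology" where
  "closed_pt = subtopology sierpinski {False}"

definition in_Cl :: "'a topology \<Rightarrow> 'b topology \<Rightarrow> ('a \<Rightarrow> 'b) \<Rightarrow> bool" where
  "in_Cl A B f \<longleftrightarrow> continuous_map A B f \<and> llp A B f closed_pt sierpinski id"

definition closed_embedding :: "'a topology \<Rightarrow> 'b topology \<Rightarrow> ('a \<Rightarrow> 'b) \<Rightarrow> bool" where
  "closed_embedding X Y g \<longleftrightarrow> embedding_map X Y g \<and> closedin Y (g ` topspace X)"

end

theory Submission
  imports Defs
begin

lemma openin_sierp: "openin sierpinski U \<longleftrightarrow> U = {} \<or> U = {True} \<or> U = UNIV"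
proof -
  have "istopology (\<lambda>U. U = {} \<or> U = {True} \<or> U = (UNIV::bool set))"
    unfolding istopology_def
  proof (intro conjI allI impI)
    fix S T :: "bool set"
    assume "S = {} \<or> S = {True} \<or> S = UNIV" "T = {} \<or> T = {True} \<or> T = UNIV"
    then show "S \<inter> T = {} \<or> S \<inter> T = {True} \<or> S \<inter> T = UNIV" by auto
  next
    fix K :: "bool set set"
    assume K: "\<forall>S\<in>K. S = {} \<or> S = {True} \<or> S = UNIV"
    show "\<Union>K = {} \<or> \<Union>K = {True} \<or> \<Union>K = UNIV"
    proof (cases "UNIV \<in> K")
      case True then show ?thesis by auto
    next
      case False
      then have "\<Union>K \<subseteq> {True}" using K by auto
      then show ?thesis by auto
    qed
  qed
  then show ?thesis unfolding sierpinski_def by simp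
qed

lemma topspace_sierp: "topspace sierpinski = UNIV"
  unfolding topspace_def using openin_sierp by auto

lemma topspace_closed_pt: "topspace closed_pt = {False}"
  unfolding closed_pt_def by (simp add: topspace_sierp)

lemma cont_sierp: "continuous_map B sierpinski j \<longleftrightarrow> openin B {y\<in>topspace B. j y}"
proof
  assume "continuous_map B sierpinski j"
  then have "openin B {y\<in>topspace B. j y \<in> {True}}"
    using openin_sierp by (simp add: continuous_map_def)
  then show "openin B {y\<in>topspace B. j y}" by simp
next
  assume o: "openin B {y\<in>topspace B. j y}"
  show "continuous_map B sierpinski j"
    unfolding continuous_map_def
  proof (intro conjI allI impI)
    show "j \<in> topspace B \<rightarrow> topspace sierpinski" by (simp add: topspace_sierp)
    fix U assume "openin sierpinski U"
    then have "U = {} \<or> U = {True} \<or> U = UNIV" by (simp add: openin_sierp)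
    then show "openin B {x \<in> topspace B. j x \<in> U}"
    proof (elim disjE)
      assume "U = {True}" then show ?thesis using o by simp
    qed auto
  qed
qed

lemma cont_closed_pt: "continuous_map B closed_pt h \<longleftrightarrow> (\<forall>y\<in>topspace B. \<not> h y)"
proof
  assume "continuous_map B closed_pt h"
  then show "\<forall>y\<in>topspace B. \<not> h y"
    using topspace_closed_pt by (metis continuous_map_def Pi_iff singletonD)
next
  assume a: "\<forall>y\<in>topspace B. \<not> h y"
  have "continuous_map B closed_pt (\<lambda>_. False)"
    by (simp add: topspace_closed_pt)
  then show "continuous_map B closed_pt h"
    by (rule continuous_map_eq) (use a in auto)
qed

lemma part1:
  assumes cf: "continuous_map A B f"
  shows "in_Cl A B f \<longleftrightarrow> B closure_of (f ` topspace A) = topspace B"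
proof -
  have fA: "f ` topspace A \<subseteq> topspace B" using cf by (simp add: continuous_map_image_subset_topspace)
  show ?thesis
  proof
    assume "in_Cl A B f"
    then have L: "llp A B f closed_pt sierpinski id" by (simp add: in_Cl_def)
    show "B closure_of (f ` topspace A) = topspace B"
    proof (rule ccontr)
      assume ne: "B closure_of (f ` topspace A) \<noteq> topspace B"
      define U where "U = topspace B - B closure_of (f ` topspace A)"
      have oU: "openin B U" unfolding U_def by (simp add: openin_diff)
      have csub: "B closure_of (f ` topspace A) \<subseteq> topspace B" by (rule closure_of_subset_topspace)
      have "U \<noteq> {}" unfolding U_def using ne csub by auto
      then obtain y where y: "y \<in> U" by auto
      define j where "j = (\<lambda>y. y \<in> U)"
      have "{y\<in>topspace B. j y} = U" unfolding j_def U_def by auto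
      then have cj: "continuous_map B sierpinski j" using oU by (simp add: cont_sierp)
      have ci: "continuous_map A closed_pt (\<lambda>_. False)" by (simp add: topspace_closed_pt)
      have comm: "\<forall>x\<in>topspace A. id ((\<lambda>_. False) x) = j (f x)"
      proof
        fix x assume x: "x \<in> topspace A"
        have "f x \<in> B closure_of (f ` topspace A)"
          using subsetD[OF closure_of_subset[OF fA] imageI[OF x]] .
        then show "id ((\<lambda>_. False) x) = j (f x)" by (simp add: j_def U_def)
      qed
      have pre: "continuous_map A closed_pt (\<lambda>_. False) \<and> continuous_map B sierpinski j \<and>
            (\<forall>x\<in>topspace A. id ((\<lambda>_. False) x) = j (f x))"
        using ci cj comm by (intro conjI)
      obtain h where h: "continuous_map B closed_pt h" "\<forall>y\<in>topspace B. id (h y) = j y"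
        using mp[OF spec[OF spec[OF L[unfolded llp_def]], of "\<lambda>_. False" j] pre] by blast
      have "y \<in> topspace B" using y U_def by auto
      then have "\<not> h y" using h(1) unfolding cont_closed_pt by blast
      moreover have "h y" using h(2) \<open>y \<in> topspace B\<close> y unfolding j_def by simp
      ultimately show False by simp
    qed
  next
    assume d: "B closure_of (f ` topspace A) = topspace B"
    have "llp A B f closed_pt sierpinski id"
      unfolding llp_def
    proof (intro allI impI)
      fix i j
      assume a: "continuous_map A closed_pt i \<and> continuous_map B sierpinski j \<and>
            (\<forall>x\<in>topspace A. id (i x) = j (f x))"
      define U where "U = {y\<in>topspace B. j y}"
      have cj: "continuous_map B sierpinski j" using a by (rule conjE) (erule conjE)
      have oU: "openin B U" using cj unfolding U_def by (simp only: cont_sierp)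
      have ci: "continuous_map A closed_pt i" using a by (rule conjE)
      have iF: "\<forall>x\<in>topspace A. \<not> i x" using ci by (simp only: cont_closed_pt)
      have comm: "\<forall>x\<in>topspace A. id (i x) = j (f x)" using a by (elim conjE)
      have jF: "\<forall>y\<in>topspace B. \<not> j y"
      proof (intro ballI notI)
        fix y assume y: "y \<in> topspace B" "j y"
        then have yU: "y \<in> U" unfolding U_def by blast
        have "y \<in> B closure_of (f ` topspace A)" using d y(1) by (simp only:)
        then obtain z where z: "z \<in> f ` topspace A" "z \<in> U"
          using oU yU unfolding in_closure_of by blast
        then obtain x where x: "x \<in> topspace A" "z = f x" by blast
        have "j (f x)" using z(2) x(2) unfolding U_def by blast
        moreover have "\<not> j (f x)" using comm iF x(1) by force
        ultimately show False by (rule notE[rotated])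
      qed
      show "\<exists>h. continuous_map B closed_pt h \<and> (\<forall>x\<in>topspace A. h (f x) = i x) \<and>
             (\<forall>y\<in>topspace B. id (h y) = j y)"
      proof (intro exI conjI)
        show "continuous_map B closed_pt j" using jF by (simp only: cont_closed_pt)
        show "\<forall>x\<in>topspace A. j (f x) = i x" using comm by simp
        show "\<forall>y\<in>topspace B. id (j y) = j y" by simp
      qed
    qed
    then show "in_Cl A B f" using cf by (simp add: in_Cl_def)
  qed
qed

lemma cm_in: "continuous_map X Y f \<Longrightarrow> x \<in> topspace X \<Longrightarrow> f x \<in> topspace Y"
  by (auto simp: continuous_map_def)

lemma part2a:
  assumes ce: "closed_embedding X Y g" and cl: "in_Cl A' B' f'"
  shows "llp A' B' f' X Y g"
proof -
  have emb: "embedding_map X Y g" and clo: "closedin Y (g ` topspace X)"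
    using ce by (auto simp: closed_embedding_def)
  obtain g' where hm: "homeomorphic_maps X (subtopology Y (g ` topspace X)) g g'"
    using emb unfolding embedding_map_def homeomorphic_map_maps by blast
  have cg': "continuous_map (subtopology Y (g ` topspace X)) X g'"
    and inv1: "\<forall>x\<in>topspace X. g' (g x) = x"
    and inv2: "\<forall>y\<in>topspace (subtopology Y (g ` topspace X)). g (g' y) = y"
    using hm unfolding homeomorphic_maps_def by auto
  have cf': "continuous_map A' B' f'" using cl by (simp add: in_Cl_def)
  have dense: "B' closure_of (f' ` topspace A') = topspace B'"
    using cl part1[OF cf'] by simp
  show ?thesis
    unfolding llp_def
  proof (intro allI impI)
    fix i j
    assume a: "continuous_map A' X i \<and> continuous_map B' Y j \<and>
            (\<forall>x\<in>topspace A'. g (i x) = j (f' x))"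
    have ci: "continuous_map A' X i" and cj: "continuous_map B' Y j"
      and comm: "\<forall>x\<in>topspace A'. g (i x) = j (f' x)" using a by auto
    have sub1: "j ` f' ` topspace A' \<subseteq> g ` topspace X"
    proof
      fix z assume "z \<in> j ` f' ` topspace A'"
      then obtain x where x: "x \<in> topspace A'" "z = j (f' x)" by blast
      then have "z = g (i x)" using comm by simp
      moreover have "i x \<in> topspace X" using ci x(1) by (rule cm_in)
      ultimately show "z \<in> g ` topspace X" by blast
    qed
    have jin: "j y \<in> g ` topspace X" if y: "y \<in> topspace B'" for y
    proof -
      have "y \<in> B' closure_of (f' ` topspace A')" using dense y by simp
      then have "j y \<in> Y closure_of (j ` f' ` topspace A')"
        using continuous_map_image_closure_subset[OF cj] by blast
      also have "\<dots> \<subseteq> g ` topspace X" by (rule closure_of_minimal[OF sub1 clo])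
      finally show ?thesis .
    qed
    have cj2: "continuous_map B' (subtopology Y (g ` topspace X)) j"
      using cj jin by (simp add: continuous_map_in_subtopology)
    have ch: "continuous_map B' X (g' \<circ> j)"
      by (rule continuous_map_compose[OF cj2 cg'])
    have jY: "j y \<in> topspace Y" if "y \<in> topspace B'" for y
      using cj that by (rule cm_in)
    show "\<exists>h. continuous_map B' X h \<and> (\<forall>x\<in>topspace A'. h (f' x) = i x) \<and>
             (\<forall>y\<in>topspace B'. g (h y) = j y)"
    proof (intro exI conjI ballI)
      show "continuous_map B' X (g' \<circ> j)" by (rule ch)
    next
      fix x assume x: "x \<in> topspace A'"
      have "i x \<in> topspace X" using ci x by (rule cm_in)
      then show "(g' \<circ> j) (f' x) = i x" using comm x inv1 by (metis comp_apply)
    next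
      fix y assume y: "y \<in> topspace B'"
      have "j y \<in> topspace (subtopology Y (g ` topspace X))"
        using jin[OF y] jY[OF y] by simp
      then show "g ((g' \<circ> j) y) = j y" using inv2 by simp
    qed
  qed
qed

lemma part2b:
  fixes X :: "'c topology" and Y :: "'d topology"
  assumes cg: "continuous_map X Y g"
    and H: "\<forall>(A'::'c topology) (B'::'d topology) f'. in_Cl A' B' f' \<longrightarrow> llp A' B' f' X Y g"
  shows "closed_embedding X Y g"
proof -
  define S where "S = Y closure_of (g ` topspace X)"
  define B' where "B' = subtopology Y S"
  have gX: "g ` topspace X \<subseteq> topspace Y" using cg by (simp add: continuous_map_image_subset_topspace)
  have gS: "g ` topspace X \<subseteq> S" unfolding S_def by (rule closure_of_subset[OF gX])
  have SY: "S \<subseteq> topspace Y" unfolding S_def by (rule closure_of_subset_topspace)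
  have tB: "topspace B' = S" unfolding B'_def using SY by auto
  have cgB: "continuous_map X B' g"
    unfolding B'_def using cg gS by (auto simp: continuous_map_in_subtopology)
  have "B' closure_of (g ` topspace X) = S \<inter> (Y closure_of (S \<inter> g ` topspace X))"
    unfolding B'_def by (rule closure_of_subtopology)
  also have "\<dots> = S" using gS unfolding S_def by (simp add: Int_absorb1)
  finally have dense: "B' closure_of (g ` topspace X) = topspace B'" using tB by simp
  have inCl: "in_Cl X B' g" using part1[OF cgB] dense by simp
  have L: "llp X B' g X Y g" using H inCl by blast
  have "\<exists>h. continuous_map B' X h \<and> (\<forall>x\<in>topspace X. h (g x) = id x) \<and>
             (\<forall>y\<in>topspace B'. g (h y) = id y)"
    using L[unfolded llp_def, rule_format, of id id] continuous_map_id[of X]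
      continuous_map_from_subtopology[OF continuous_map_id[of Y], of S]
    unfolding B'_def by simp
  then obtain h where ch: "continuous_map B' X h" and h1: "\<forall>x\<in>topspace X. h (g x) = x"
    and h2: "\<forall>y\<in>S. g (h y) = y" using tB by auto
  have hX: "h y \<in> topspace X" if "y \<in> S" for y
    using cm_in[OF ch] that tB by simp
  have eq: "g ` topspace X = S"
  proof
    show "S \<subseteq> g ` topspace X"
    proof
      fix y assume "y \<in> S"
      then show "y \<in> g ` topspace X" using h2 hX by (metis image_eqI)
    qed
  qed (rule gS)
  have "homeomorphic_maps X (subtopology Y (g ` topspace X)) g h"
    unfolding homeomorphic_maps_def
    using cgB ch h1 h2 tB eq unfolding B'_def by auto
  then have "embedding_map X Y g"
    unfolding embedding_map_def homeomorphic_map_maps by blast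
  moreover have "closedin Y (g ` topspace X)" using eq unfolding S_def by (metis closedin_closure_of)
  ultimately show ?thesis by (simp add: closed_embedding_def)
qed

theorem claim2:
  fixes A :: "'a topology" and B :: "'b topology" and f :: "'a \<Rightarrow> 'b"
    and X :: "'c topology" and Y :: "'d topology" and g :: "'c \<Rightarrow> 'd"
  shows "(continuous_map A B f \<longrightarrow>
           (in_Cl A B f \<longleftrightarrow> B closure_of (f ` topspace A) = topspace B))
       \<and> (continuous_map X Y g \<longrightarrow>
           (closed_embedding X Y g \<longrightarrow> (\<forall>(A'::'a topology) (B'::'b topology) f'.
               in_Cl A' B' f' \<longrightarrow> llp A' B' f' X Y g))
         \<and> ((\<forall>(A'::'c topology) (B'::'d topology) f'.
               in_Cl A' B' f' \<longrightarrow> llp A' B' f' X Y g) \<longrightarrow> closed_embedding X Y g))"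
proof (intro conjI impI allI)
  assume "continuous_map A B f"
  then show "in_Cl A B f \<longleftrightarrow> B closure_of (f ` topspace A) = topspace B" by (rule part1)
next
  fix A' :: "'a topology" and B' :: "'b topology" and f'
  assume "closed_embedding X Y g" "in_Cl A' B' f'"
  then show "llp A' B' f' X Y g" by (rule part2a)
next
  assume "continuous_map X Y g"
    "\<forall>(A'::'c topology) (B'::'d topology) f'. in_Cl A' B' f' \<longrightarrow> llp A' B' f' X Y g"
  then show "closed_embedding X Y g" by (rule part2b)
qed

end
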